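(* For $n\geq 3$, $$b(n)=2+n+\sum_{k=2}^{n}\binom{n}{k}\, b_{-}(k).$$ Furthermore, $b_{-}(2)=2$, and for all $k\geq 3$, $$b_{-}(k)=b_{-}^{-}(k)+2+\sum_{i=2}^{k-1}\binom{k}{i}\, b_{-}(i).$$
   Context: For $n\in\mathbb{N}$, the Boolean lattice $B(n)$ is the set of binary words of length $n$ ordered coordinatewise (i.e. $B(n)=\mathbf{2}^n$ with $\mathbf{2}$ the chain $0<1$). For $0\leq \ell\leq n$, the level $L_\ell(n)$ is the set of words with exactly $\ell$ ones. For $n\geq 2$, $B_{-}(n):=\bigcup_{i=2}^n L_i(n)$ and $B^{-}(n):=\bigcup_{i=0}^{n-2}L_i(n)$, and for $n\geq 3$, $B_{-}^{-}(n):=\bigcup_{i=2}^{n-2}L_i(n)$, each with the induced order. For a finite poset $P$, $d(P)$ is the number of down-sets of $P$ (subsets closed under going down, including the empty set). Set $b(n):=d(B(n))$ (the $n$-th Dedekind number), $b_{-}(n):=d(B_{-}(n))$, $b_{-}^{-}(n):=d(B_{-}^{-}(n))$. *)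

theory Defs
  imports Main
begin

(* A binary word w of length n is encoded by the set of positions i < n where w has a 1.
   The coordinatewise order on words corresponds to set inclusion. *)
definition boolean_lattice :: "nat \<Rightarrow> nat set set" where
  "boolean_lattice n = Pow {..<n}"

definition level :: "nat \<Rightarrow> nat \<Rightarrow> nat set set" where
  "level l n = {w \<in> boolean_lattice n. card w = l}"

definition B_lower :: "nat \<Rightarrow> nat set set" where
  "B_lower n = (\<Union>i\<in>{2..n}. level i n)"

definition B_lower_upper :: "nat \<Rightarrow> nat set set" where
  "B_lower_upper n = (\<Union>i\<in>{2..n-2}. level i n)"

(* down-sets of the subposet P (order = inclusion), including the empty set *)
definition down_sets :: "nat set set \<Rightarrow> nat set set set" where
  "down_sets P = {D. D \<subseteq> P \<and> (\<forall>x\<in>D. \<forall>y\<in>P. y \<subseteq> x \<longrightarrow> y \<in> D)}"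

definition num_down_sets :: "nat set set \<Rightarrow> nat" where
  "num_down_sets P = card (down_sets P)"

definition b :: "nat \<Rightarrow> nat" where
  "b n = num_down_sets (boolean_lattice n)"

definition b_lower :: "nat \<Rightarrow> nat" where
  "b_lower n = num_down_sets (B_lower n)"

definition b_lower_upper :: "nat \<Rightarrow> nat" where
  "b_lower_upper n = num_down_sets (B_lower_upper n)"

end

theory Submission
  imports Defs
begin


definition band :: "nat set \<Rightarrow> nat \<Rightarrow> nat set set" where
  "band S m = {x. x \<subseteq> S \<and> 2 \<le> card x \<and> card x \<le> m}"

definition atoms :: "nat set \<Rightarrow> nat set set \<Rightarrow> nat set" where
  "atoms N D = {i\<in>N. {i} \<in> D}"

lemma bl: "B_lower n = band {..<n} n"
proof -
  have "card x \<le> n" if "x \<subseteq> {..<n}" for x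
    using card_mono[OF _ that] by simp
  then show ?thesis
    unfolding B_lower_def level_def boolean_lattice_def band_def by auto
qed

lemma blu: "B_lower_upper n = band {..<n} (n-2)"
  unfolding B_lower_upper_def level_def boolean_lattice_def band_def by auto

lemma iso:
  assumes inj: "inj_on f (\<Union>P)"
  shows "card (down_sets ((`) f ` P)) = card (down_sets P)"
proof -
  have injP: "inj_on ((`) f) P"
    using inj_on_image_Pow[OF inj] by (rule inj_on_subset) auto
  have ord: "f ` y \<subseteq> f ` x \<longleftrightarrow> y \<subseteq> x" if "x \<in> P" "y \<in> P" for x y
  proof -
    have "inj_on f (x \<union> y)" using inj by (rule inj_on_subset) (use that in auto)
    then show ?thesis unfolding inj_on_def by blast
  qed
  have eq: "down_sets ((`) f ` P) = (`) ((`) f) ` down_sets P"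
  proof
    show "(`) ((`) f) ` down_sets P \<subseteq> down_sets ((`) f ` P)"
    proof
      fix D' assume "D' \<in> (`) ((`) f) ` down_sets P"
      then obtain D where D: "D \<in> down_sets P" "D' = (`) f ` D" by blast
      have "y \<in> D'" if H: "x \<in> D'" "y \<in> (`) f ` P" "y \<subseteq> x" for x y
      proof -
        obtain x0 where x0: "x0 \<in> D" "x = f ` x0" using H D by blast
        obtain y0 where y0: "y0 \<in> P" "y = f ` y0" using H by blast
        have "x0 \<in> P" using D x0 unfolding down_sets_def by blast
        then have "y0 \<subseteq> x0" using ord y0 x0 H by blast
        then have "y0 \<in> D" using D x0 y0 unfolding down_sets_def by blast
        then show ?thesis using D y0 by blast
      qed
      moreover have "D' \<subseteq> (`) f ` P" using D unfolding down_sets_def by blast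
      ultimately show "D' \<in> down_sets ((`) f ` P)" unfolding down_sets_def by blast
    qed
  next
    show "down_sets ((`) f ` P) \<subseteq> (`) ((`) f) ` down_sets P"
    proof
      fix D' assume D': "D' \<in> down_sets ((`) f ` P)"
      define D where "D = {x\<in>P. f ` x \<in> D'}"
      have "D' = (`) f ` D" using D' unfolding D_def down_sets_def by blast
      moreover have "D \<in> down_sets P"
      proof -
        have "y \<in> D" if "x \<in> D" "y \<in> P" "y \<subseteq> x" for x y
        proof -
          have "f ` y \<subseteq> f ` x" using that by blast
          moreover have "f ` y \<in> (`) f ` P" using that by blast
          ultimately show ?thesis using that D' unfolding D_def down_sets_def by blast
        qed
        then show ?thesis unfolding down_sets_def D_def by blast
      qed
      ultimately show "D' \<in> (`) ((`) f) ` down_sets P" by blast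
    qed
  qed
  have "inj_on ((`) ((`) f)) (down_sets P)"
    using inj_on_image_Pow[OF injP] by (rule inj_on_subset) (auto simp: down_sets_def)
  then show ?thesis unfolding eq by (rule card_image)
qed

lemma band_image:
  assumes "bij_betw f A S"
  shows "(`) f ` band A m = band S m"
proof
  have inj: "inj_on f A" and im: "f ` A = S" using assms by (auto simp: bij_betw_def)
  have c: "card (f ` x) = card x" if "x \<subseteq> A" for x
    using inj that by (meson card_image inj_on_subset)
  show "(`) f ` band A m \<subseteq> band S m"
    using c im unfolding band_def by auto
  show "band S m \<subseteq> (`) f ` band A m"
  proof
    fix x assume x: "x \<in> band S m"
    then have "x \<subseteq> f ` A" using im unfolding band_def by auto
    then obtain y where y: "y \<subseteq> A" "x = f ` y" by (auto simp: subset_image_iff)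
    then show "x \<in> (`) f ` band A m" using x c[OF y(1)] unfolding band_def by auto
  qed
qed

lemma band_card:
  assumes "finite S"
  shows "card (down_sets (band S m)) = num_down_sets (band {..<card S} m)"
proof -
  obtain h where h: "bij_betw h {0..<card S} S" using ex_bij_betw_nat_finite[OF assms] by blast
  then have h': "bij_betw h {..<card S} S" by (simp add: atLeast0LessThan)
  have "inj_on h (\<Union>(band {..<card S} m))"
    using h' unfolding bij_betw_def band_def by (rule inj_on_subset[OF conjunct1]) auto
  then show ?thesis unfolding num_down_sets_def band_image[OF h', symmetric] by (rule iso)
qed



lemma card_lt2: "finite x \<Longrightarrow> card x < 2 \<Longrightarrow> x = {} \<or> (\<exists>i. x = {i})"
proof -
  assume f: "finite x" and c: "card x < 2"
  then consider "card x = 0" | "card x = 1" by linarith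
  then show ?thesis
  proof cases
    case 1 then show ?thesis using f by simp
  next
    case 2 then show ?thesis by (meson card_1_singletonE)
  qed
qed

lemma atoms_sub:
  assumes "D \<in> down_sets (Pow N)"
  shows "D \<subseteq> Pow (atoms N D)"
proof
  fix x assume x: "x \<in> D"
  have "x \<subseteq> N" using assms x unfolding down_sets_def by blast
  have "i \<in> atoms N D" if "i \<in> x" for i
  proof -
    have "{i} \<subseteq> x" "{i} \<in> Pow N" using that \<open>x \<subseteq> N\<close> by auto
    then have "{i} \<in> D" using assms x unfolding down_sets_def by blast
    then show ?thesis using that \<open>x \<subseteq> N\<close> unfolding atoms_def by auto
  qed
  then show "x \<in> Pow (atoms N D)" by auto
qed

lemma fiber_band:
  assumes fin: "finite N" and SN: "S \<subseteq> N" and S2: "2 \<le> card S" and m1: "1 \<le> m"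
  shows "card {D \<in> down_sets (Pow N). atoms N D = S \<and> (\<forall>x\<in>D. card x \<le> m)}
       = card (down_sets (band S m))"
proof -
  define lo where "lo = {x. x \<subseteq> S \<and> card x < 2}"
  define F where "F = {D \<in> down_sets (Pow N). atoms N D = S \<and> (\<forall>x\<in>D. card x \<le> m)}"
  have finS: "finite S" using finite_subset[OF SN fin] .
  have "S \<noteq> {}" using S2 by auto
  then obtain i0 where i0: "i0 \<in> S" by blast
  have loband: "lo \<inter> band S m = {}" unfolding lo_def band_def by auto
  have bandN: "band S m \<subseteq> Pow N" using SN unfolding band_def by auto
  have A: "D \<inter> band S m \<in> down_sets (band S m)" if "D \<in> F" for D
  proof -
    have "D \<in> down_sets (Pow N)" using that unfolding F_def by blast
    then show ?thesis using bandN unfolding down_sets_def by blast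
  qed
  have B: "lo \<union> (D \<inter> band S m) = D" if D: "D \<in> F" for D
  proof
    have DS: "D \<in> down_sets (Pow N)" and at: "atoms N D = S" and cm: "\<forall>x\<in>D. card x \<le> m"
      using D unfolding F_def by auto
    have sub: "D \<subseteq> Pow S" using atoms_sub[OF DS] at by simp
    show "D \<subseteq> lo \<union> (D \<inter> band S m)"
    proof
      fix x assume x: "x \<in> D"
      have "x \<subseteq> S" "card x \<le> m" using x sub cm by auto
      then show "x \<in> lo \<union> (D \<inter> band S m)"
        using x unfolding lo_def band_def by (cases "card x < 2") auto
    qed
    show "lo \<union> (D \<inter> band S m) \<subseteq> D"
    proof -
      have "x \<in> D" if "x \<in> lo" for x
      proof -
        have xS: "x \<subseteq> S" "card x < 2" using that unfolding lo_def by auto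
        then have "finite x" using finite_subset[OF _ finS] by blast
        then have "x = {} \<or> (\<exists>i. x = {i})" using card_lt2 xS by blast
        then show ?thesis
        proof
          assume "x = {}"
          have "{i0} \<in> D" using at i0 unfolding atoms_def by auto
          then show ?thesis using DS \<open>x = {}\<close> unfolding down_sets_def by blast
        next
          assume "\<exists>i. x = {i}"
          then obtain i where "x = {i}" by blast
          then show ?thesis using at xS unfolding atoms_def by auto
        qed
      qed
      then show ?thesis by blast
    qed
  qed
  have C: "(lo \<union> E) \<inter> band S m = E" if "E \<in> down_sets (band S m)" for E
    using that loband unfolding down_sets_def by blast
  have D: "lo \<union> E \<in> F" if E: "E \<in> down_sets (band S m)" for E
  proof -
    have Eb: "E \<subseteq> band S m" using E unfolding down_sets_def by blast
    have loS: "lo \<subseteq> Pow S" by (auto simp: lo_def)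
    have bandS: "band S m \<subseteq> Pow S" by (auto simp: band_def)
    have "lo \<union> E \<subseteq> Pow N" using Eb bandS loS SN by blast
    moreover have "y \<in> lo \<union> E" if "x \<in> lo \<union> E" "y \<in> Pow N" "y \<subseteq> x" for x y
    proof -
      have xS: "x \<subseteq> S" using that Eb loS bandS by blast
      then have yS: "y \<subseteq> S" using that by blast
      have fx: "finite x" using finite_subset[OF xS finS] .
      have cyx: "card y \<le> card x" using card_mono[OF fx \<open>y \<subseteq> x\<close>] .
      show ?thesis
      proof (cases "card y < 2")
        case True then show ?thesis using yS unfolding lo_def by blast
      next
        case False
        then have "x \<notin> lo" using cyx unfolding lo_def by auto
        then have "x \<in> E" using that by blast
        then have "card x \<le> m" using Eb unfolding band_def by blast
        then have "y \<in> band S m" using False cyx yS unfolding band_def by auto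
        then show ?thesis using E \<open>x \<in> E\<close> \<open>y \<subseteq> x\<close> unfolding down_sets_def by blast
      qed
    qed
    ultimately have "lo \<union> E \<in> down_sets (Pow N)" unfolding down_sets_def by blast
    moreover have "atoms N (lo \<union> E) = S"
    proof -
      have "{i} \<notin> E" for i using Eb unfolding band_def by auto
      moreover have "{i} \<in> lo \<longleftrightarrow> i \<in> S" for i unfolding lo_def by auto
      ultimately show ?thesis using SN unfolding atoms_def by auto
    qed
    moreover have "\<forall>x\<in>lo \<union> E. card x \<le> m"
    proof
      fix x assume "x \<in> lo \<union> E"
      then show "card x \<le> m"
      proof
        assume "x \<in> lo" then show ?thesis using m1 unfolding lo_def by auto
      next
        assume "x \<in> E" then show ?thesis using Eb unfolding band_def by auto
      qed
    qed
    ultimately show ?thesis unfolding F_def by blast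
  qed
  have "bij_betw (\<lambda>D. D \<inter> band S m) F (down_sets (band S m))"
  proof (rule bij_betw_byWitness[where f'="\<lambda>E. lo \<union> E"])
    show "\<forall>a\<in>F. lo \<union> (a \<inter> band S m) = a" using B by blast
    show "\<forall>a'\<in>down_sets (band S m). (lo \<union> a') \<inter> band S m = a'" using C by blast
    show "(\<lambda>D. D \<inter> band S m) ` F \<subseteq> down_sets (band S m)" using A by blast
    show "(\<union>) lo ` down_sets (band S m) \<subseteq> F" using D by blast
  qed
  then show ?thesis unfolding F_def[symmetric] by (rule bij_betw_same_card)
qed

definition g :: "nat \<Rightarrow> nat" where
  "g k = (if k = 0 then 2 else if k = 1 then 1 else b_lower k)"

lemma fiber_card:
  assumes fin: "finite N" and SN: "S \<subseteq> N"
  shows "card {D \<in> down_sets (Pow N). atoms N D = S} = g (card S)"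
proof -
  have finS: "finite S" using finite_subset[OF SN fin] .
  consider "card S = 0" | "card S = 1" | "card S \<ge> 2" by linarith
  then show ?thesis
  proof cases
    case 1
    then have S: "S = {}" using finS by simp
    have "{D \<in> down_sets (Pow N). atoms N D = S} = {{}, {{}}}"
    proof
      show "{D \<in> down_sets (Pow N). atoms N D = S} \<subseteq> {{}, {{}}}"
        using atoms_sub S by fastforce
      show "{{}, {{}}} \<subseteq> {D \<in> down_sets (Pow N). atoms N D = S}"
        using S unfolding down_sets_def atoms_def by auto
    qed
    then show ?thesis using 1 unfolding g_def by simp
  next
    case 2
    then obtain i where S: "S = {i}" using card_1_singletonE by blast
    have "{D \<in> down_sets (Pow N). atoms N D = S} = {{{}, {i}}}"
    proof
      show "{D \<in> down_sets (Pow N). atoms N D = S} \<subseteq> {{{}, {i}}}"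
      proof
        fix D assume D: "D \<in> {D \<in> down_sets (Pow N). atoms N D = S}"
        then have "D \<subseteq> Pow {i}" using atoms_sub S by fastforce
        moreover have "{i} \<in> D" using D S unfolding atoms_def by auto
        moreover then have "{} \<in> D" using D unfolding down_sets_def by blast
        ultimately have "D = {{}, {i}}" by (auto simp: Pow_singleton_iff)
        then show "D \<in> {{{}, {i}}}" by simp
      qed
      show "{{{}, {i}}} \<subseteq> {D \<in> down_sets (Pow N). atoms N D = S}"
        using S SN unfolding down_sets_def atoms_def by auto
    qed
    then show ?thesis using 2 unfolding g_def by simp
  next
    case 3
    have "{D \<in> down_sets (Pow N). atoms N D = S}
        = {D \<in> down_sets (Pow N). atoms N D = S \<and> (\<forall>x\<in>D. card x \<le> card S)}"
    proof -
      have "card x \<le> card S" if "D \<in> down_sets (Pow N)" "atoms N D = S" "x \<in> D" for D x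
        using atoms_sub[OF that(1)] that finS by (metis PowD card_mono subsetD)
      then show ?thesis by blast
    qed
    also have "card \<dots> = card (down_sets (band S (card S)))"
      using fiber_band[OF fin SN 3] 3 by simp
    also have "\<dots> = b_lower (card S)"
      using band_card[OF finS] by (simp add: b_lower_def bl)
    finally show ?thesis using 3 unfolding g_def by simp
  qed
qed

lemma main_count:
  assumes fin: "finite N"
  shows "card (down_sets (Pow N)) = (\<Sum>k\<le>card N. (card N choose k) * g k)"
proof -
  have finDS: "finite (down_sets (Pow N))"
    by (rule finite_subset[of _ "Pow (Pow N)"]) (use fin in \<open>auto simp: down_sets_def\<close>)
  have "card (down_sets (Pow N)) = (\<Sum>D\<in>down_sets (Pow N). 1)" by simp
  also have "\<dots> = (\<Sum>S\<in>Pow N. \<Sum>D\<in>{D \<in> down_sets (Pow N). atoms N D = S}. 1)"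
    by (rule sum.group[symmetric]) (use finDS fin in \<open>auto simp: atoms_def\<close>)
  also have "\<dots> = (\<Sum>S\<in>Pow N. g (card S))"
    by (rule sum.cong) (use fiber_card fin in auto)
  also have "\<dots> = (\<Sum>k\<le>card N. \<Sum>S\<in>{S \<in> Pow N. card S = k}. g (card S))"
    by (rule sum.group[symmetric]) (use fin in \<open>auto intro: card_mono\<close>)
  also have "\<dots> = (\<Sum>k\<le>card N. (card N choose k) * g k)"
  proof (rule sum.cong)
    fix k assume "k \<in> {..card N}"
    have "(\<Sum>S\<in>{S \<in> Pow N. card S = k}. g (card S)) = (\<Sum>S\<in>{S \<in> Pow N. card S = k}. g k)"
      by (rule sum.cong) auto
    also have "\<dots> = card {S. S \<subseteq> N \<and> card S = k} * g k" by simp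
    also have "\<dots> = (card N choose k) * g k" using n_subsets[OF fin] by simp
    finally show "(\<Sum>S\<in>{S \<in> Pow N. card S = k}. g (card S)) = (card N choose k) * g k" .
  qed simp
  finally show ?thesis .
qed

lemma part1:
  assumes "n \<ge> 1"
  shows "b n = 2 + n + (\<Sum>k=2..n. (n choose k) * b_lower k)"
proof -
  have e1: "b n = (\<Sum>k\<le>n. (n choose k) * g k)"
    using main_count[of "{..<n}"] unfolding b_def num_down_sets_def boolean_lattice_def by simp
  have e2: "{..n} = {0,1} \<union> {2..n}" using assms by auto
  have e3: "(\<Sum>k\<in>{0,1} \<union> {2..n}. (n choose k) * g k) = (\<Sum>k\<in>{0,1}. (n choose k) * g k) + (\<Sum>k=2..n. (n choose k) * g k)"
    by (rule sum.union_disjoint) auto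
  have e4: "(\<Sum>k=2..n. (n choose k) * g k) = (\<Sum>k=2..n. (n choose k) * b_lower k)"
    by (rule sum.cong) (auto simp: g_def)
  have e5: "(\<Sum>k\<in>{0,1}. (n choose k) * g k) = 2 + n" by (simp add: g_def)
  show ?thesis using e1 e2 e3 e4 e5 by simp
qed

lemma bl2: "b_lower 2 = 2"
proof -
  have "band {..<2::nat} 2 = {{0,1}}"
  proof
    show "band {..<2::nat} 2 \<subseteq> {{0,1}}"
    proof
      fix x assume "x \<in> band {..<2::nat} 2"
      then have "x \<subseteq> {0,1}" "card x \<ge> 2" unfolding band_def by auto
      then show "x \<in> {{0,1}}"
        using card_seteq[of "{0::nat,1}" x] by simp
    qed
    show "{{0,1}} \<subseteq> band {..<2::nat} 2" unfolding band_def by auto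
  qed
  moreover have "down_sets {{0::nat,1}} = Pow {{0,1}}"
    unfolding down_sets_def by blast
  moreover have "card (Pow {{0::nat,1}}) = 2" by (simp add: card_Pow)
  ultimately show ?thesis unfolding b_lower_def num_down_sets_def bl by simp
qed

definition dual :: "nat set \<Rightarrow> nat set set \<Rightarrow> nat set set" where
  "dual N D = (\<lambda>x. N - x) ` (Pow N - D)"

lemma dual_sub: "dual N D \<subseteq> Pow N"
  unfolding dual_def by auto

lemma mem_dual:
  assumes "y \<subseteq> N"
  shows "y \<in> dual N D \<longleftrightarrow> N - y \<notin> D"
proof
  assume "y \<in> dual N D"
  then obtain z where z: "z \<subseteq> N" "z \<notin> D" "y = N - z" unfolding dual_def by auto
  then have "N - y = z" by auto
  then show "N - y \<notin> D" using z by simp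
next
  assume "N - y \<notin> D"
  moreover have "y = N - (N - y)" using assms by auto
  ultimately show "y \<in> dual N D" unfolding dual_def by blast
qed

lemma dual_dual:
  assumes "D \<subseteq> Pow N"
  shows "dual N (dual N D) = D"
proof
  show "dual N (dual N D) \<subseteq> D"
  proof
    fix x assume x: "x \<in> dual N (dual N D)"
    then have xN: "x \<subseteq> N" using dual_sub by blast
    then have "N - x \<notin> dual N D" using x mem_dual by blast
    moreover have "N - (N - x) = x" using xN by auto
    ultimately show "x \<in> D" using mem_dual[of "N - x" N D] by auto
  qed
  show "D \<subseteq> dual N (dual N D)"
  proof
    fix x assume x: "x \<in> D"
    then have xN: "x \<subseteq> N" using assms by blast
    have "N - (N - x) = x" using xN by auto
    then have "N - x \<notin> dual N D" using mem_dual[of "N - x" N D] x by auto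
    then show "x \<in> dual N (dual N D)" using mem_dual[OF xN] by blast
  qed
qed

lemma dual_ds:
  assumes D: "D \<in> down_sets (Pow N)"
  shows "dual N D \<in> down_sets (Pow N)"
proof -
  have "y \<in> dual N D" if x: "x \<in> dual N D" and y: "y \<in> Pow N" and yx: "y \<subseteq> x" for x y
  proof -
    have xN: "x \<subseteq> N" using x dual_sub by blast
    have nx: "N - x \<notin> D" using x mem_dual[OF xN] by blast
    have "N - y \<notin> D"
    proof
      assume "N - y \<in> D"
      moreover have "N - x \<subseteq> N - y" "N - x \<in> Pow N" using yx by auto
      ultimately have "N - x \<in> D" using D unfolding down_sets_def by blast
      then show False using nx by blast
    qed
    then show ?thesis using mem_dual[of y N D] y by blast
  qed
  then show ?thesis using dual_sub[of N D] unfolding down_sets_def by blast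
qed

lemma coatom_dual:
  assumes "j \<in> N"
  shows "N - {j} \<in> dual N D \<longleftrightarrow> {j} \<notin> D"
proof -
  have "N - (N - {j}) = {j}" using assms by auto
  then show ?thesis using mem_dual[of "N - {j}" N D] by auto
qed

lemma part3:
  assumes k3: "k \<ge> 3"
  shows "b k + b_lower_upper k = 2 * b_lower k + k"
proof -
  define N where "N = {..<k}"
  define DS where "DS = down_sets (Pow N)"
  define A where "A = {D \<in> DS. atoms N D = N}"
  define C where "C = {D \<in> DS. \<exists>j\<in>N. N - {j} \<in> D}"
  have finN: "finite N" and cN: "card N = k" unfolding N_def by auto
  have finDS: "finite DS"
    unfolding DS_def by (rule finite_subset[of _ "Pow (Pow N)"]) (use finN in \<open>auto simp: down_sets_def\<close>)
  have DSsub: "D \<subseteq> Pow N" if "D \<in> DS" for D using that unfolding DS_def down_sets_def by blast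
  have AS: "A \<subseteq> DS" "C \<subseteq> DS" unfolding A_def C_def by auto
  have cA: "card A = b_lower k"
    using fiber_card[OF finN subset_refl] cN k3 unfolding A_def DS_def g_def by simp
  have "A - C = {D \<in> DS. atoms N D = N \<and> (\<forall>x\<in>D. card x \<le> k - 2)}"
  proof (intro set_eqI iffI)
    fix D assume D: "D \<in> A - C"
    have "card x \<le> k - 2" if x: "x \<in> D" for x
    proof (rule ccontr)
      assume "\<not> card x \<le> k - 2"
      then have cx: "card x \<ge> k - 1" by linarith
      have xN: "x \<subseteq> N" using x D AS DSsub by blast
      have "\<exists>j\<in>N. N - {j} \<subseteq> x"
      proof (cases "x = N")
        case True
        have "0 \<in> N" using k3 unfolding N_def by auto
        then show ?thesis using True by blast
      next
        case False
        then obtain j where j: "j \<in> N" "j \<notin> x" using xN by blast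
        have "card (N - x) = card N - card x" using card_Diff_subset[OF finite_subset[OF xN finN] xN] .
        then have "card (N - x) \<le> 1" using cx cN by linarith
        moreover have "j \<in> N - x" using j by blast
        moreover have "finite (N - x)" using finN by blast
        ultimately have "\<forall>a\<in>N - x. \<forall>b\<in>N - x. a = b" using card_le_Suc0_iff_eq by auto
        then have "N - x = {j}" using \<open>j \<in> N - x\<close> by blast
        then have "N - {j} \<subseteq> x" by blast
        then show ?thesis using j by blast
      qed
      then obtain j where j: "j \<in> N" "N - {j} \<subseteq> x" by blast
      have "N - {j} \<in> D"
        using D x j unfolding A_def DS_def down_sets_def by blast
      then show False using D j AS(1) unfolding C_def by blast
    qed
    then show "D \<in> {D \<in> DS. atoms N D = N \<and> (\<forall>x\<in>D. card x \<le> k - 2)}"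
      using D unfolding A_def by blast
  next
    fix D assume D: "D \<in> {D \<in> DS. atoms N D = N \<and> (\<forall>x\<in>D. card x \<le> k - 2)}"
    have "N - {j} \<notin> D" if j: "j \<in> N" for j
    proof
      assume "N - {j} \<in> D"
      moreover have "card (N - {j}) = k - 1" using j cN finN by simp
      moreover have "\<forall>x\<in>D. card x \<le> k - 2" using D by blast
      ultimately have "k - 1 \<le> k - 2" by metis
      then show False using k3 by linarith
    qed
    then show "D \<in> A - C" using D unfolding A_def C_def by blast
  qed
  then have cAC: "card (A - C) = b_lower_upper k"
    using fiber_band[OF finN subset_refl, of "k - 2"] cN k3
    unfolding DS_def b_lower_upper_def num_down_sets_def blu N_def by simp
  have CAeq: "C - A = (\<lambda>j. Pow (N - {j})) ` N"
  proof (intro set_eqI iffI)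
    fix D assume D: "D \<in> C - A"
    then obtain j where j: "j \<in> N" "N - {j} \<in> D" and DD: "D \<in> DS" unfolding C_def by blast
    obtain i where i: "i \<in> N" "{i} \<notin> D"
      using D DD unfolding A_def atoms_def by blast
    have "i = j"
    proof (rule ccontr)
      assume "i \<noteq> j"
      then have "{i} \<subseteq> N - {j}" "{i} \<in> Pow N" using i by auto
      then have "{i} \<in> D" using j DD unfolding DS_def down_sets_def by blast
      then show False using i by blast
    qed
    have "D = Pow (N - {j})"
    proof
      show "D \<subseteq> Pow (N - {j})"
      proof
        fix x assume x: "x \<in> D"
        have xN: "x \<subseteq> N" using x DD DSsub by blast
        have "j \<notin> x"
        proof
          assume "j \<in> x"
          then have "{j} \<subseteq> x" "{j} \<in> Pow N" using j by auto
          then have "{j} \<in> D" using x DD unfolding DS_def down_sets_def by blast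
          then show False using i \<open>i = j\<close> by blast
        qed
        then show "x \<in> Pow (N - {j})" using xN by blast
      qed
      show "Pow (N - {j}) \<subseteq> D"
        using j DD unfolding DS_def down_sets_def by blast
    qed
    then show "D \<in> (\<lambda>j. Pow (N - {j})) ` N" using j by blast
  next
    fix D assume "D \<in> (\<lambda>j. Pow (N - {j})) ` N"
    then obtain j where j: "j \<in> N" "D = Pow (N - {j})" by blast
    have "D \<in> DS" using j unfolding DS_def down_sets_def by blast
    moreover have "N - {j} \<in> D" using j by blast
    moreover have "{j} \<notin> D" using j by blast
    ultimately show "D \<in> C - A" using j unfolding C_def A_def atoms_def by blast
  qed
  have injP: "inj_on (\<lambda>j. Pow (N - {j})) N"
  proof (rule inj_onI)
    fix i j assume ij: "i \<in> N" "j \<in> N" "Pow (N - {i}) = Pow (N - {j})"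
    then have "N - {i} \<in> Pow (N - {j})" "N - {j} \<in> Pow (N - {i})" by auto
    then have "N - {i} = N - {j}" by blast
    then show "i = j" using ij by blast
  qed
  have cCA: "card (C - A) = k" unfolding CAeq card_image[OF injP] cN ..
  have "bij_betw (dual N) (DS - A) C"
  proof (rule bij_betw_byWitness[where f'="dual N"])
    show "\<forall>a\<in>DS - A. dual N (dual N a) = a"
    proof
      fix a assume "a \<in> DS - A"
      then show "dual N (dual N a) = a" using dual_dual[OF DSsub[of a]] by blast
    qed
    show "\<forall>a'\<in>C. dual N (dual N a') = a'"
    proof
      fix a assume "a \<in> C"
      then have "a \<in> DS" using AS by blast
      then show "dual N (dual N a) = a" using dual_dual[OF DSsub[of a]] by blast
    qed
    show "dual N ` (DS - A) \<subseteq> C"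
    proof
      fix D' assume "D' \<in> dual N ` (DS - A)"
      then obtain D where D: "D \<in> DS" "D \<notin> A" "D' = dual N D" by blast
      then obtain j where j: "j \<in> N" "{j} \<notin> D"
        unfolding A_def atoms_def by blast
      have "N - {j} \<in> D'" using coatom_dual[OF j(1)] j D by blast
      moreover have "D' \<in> DS" using dual_ds D unfolding DS_def by blast
      ultimately show "D' \<in> C" using j unfolding C_def by blast
    qed
    show "dual N ` C \<subseteq> DS - A"
    proof
      fix D assume "D \<in> dual N ` C"
      then obtain D' where D': "D' \<in> C" "D = dual N D'" by blast
      then obtain j where j: "j \<in> N" "N - {j} \<in> D'" and D'DS: "D' \<in> DS" unfolding C_def by blast
      have "D' = dual N D" using D'(2) dual_dual[OF DSsub[OF D'DS]] by simp
      then have "{j} \<notin> D" using coatom_dual[OF j(1)] j by blast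
      moreover have "D \<in> DS" using dual_ds D' D'DS unfolding DS_def by blast
      ultimately show "D \<in> DS - A" using j unfolding A_def atoms_def by blast
    qed
  qed
  then have c4: "card (DS - A) = card C" by (rule bij_betw_same_card)
  have cDS: "card DS = b k" unfolding DS_def b_def num_down_sets_def boolean_lattice_def N_def ..
  have finA: "finite A" "finite C" using finite_subset[OF AS(1) finDS] finite_subset[OF AS(2) finDS] by auto
  have "card DS = card A + card (DS - A)"
    using card_Diff_subset[OF finA(1) AS(1)] card_mono[OF finDS AS(1)] by linarith
  moreover have "card C = card (A \<inter> C) + card (C - A)"
    using card_Int_Diff[OF finA(2), of A] by (simp add: Int_commute)
  moreover have "card A = card (A \<inter> C) + card (A - C)"
    using card_Int_Diff[OF finA(1)] by blast
  ultimately show ?thesis using cA cAC cCA c4 cDS by linarith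
qed


theorem theorem2:
  shows "(\<forall>n::nat. n \<ge> 3 \<longrightarrow>
            b n = 2 + n + (\<Sum>k=2..n. (n choose k) * b_lower k))
         \<and> b_lower 2 = 2
         \<and> (\<forall>k::nat. k \<ge> 3 \<longrightarrow>
            b_lower k = b_lower_upper k + 2 + (\<Sum>i=2..k-1. (k choose i) * b_lower i))"
proof (intro conjI allI impI)
  fix n :: nat assume "n \<ge> 3"
  then show "b n = 2 + n + (\<Sum>k=2..n. (n choose k) * b_lower k)" using part1 by simp
next
  show "b_lower 2 = 2" by (rule bl2)
next
  fix k :: nat assume k3: "k \<ge> 3"
  have e: "{2..k} = insert k {2..k-1}" using k3 by auto
  have "(\<Sum>i=2..k. (k choose i) * b_lower i) = (k choose k) * b_lower k + (\<Sum>i=2..k-1. (k choose i) * b_lower i)"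
    unfolding e by (rule sum.insert) (use k3 in auto)
  then have s: "(\<Sum>i=2..k. (k choose i) * b_lower i) = b_lower k + (\<Sum>i=2..k-1. (k choose i) * b_lower i)"
    by simp
  have p1: "b k = 2 + k + (\<Sum>i=2..k. (k choose i) * b_lower i)" using part1 k3 by simp
  have p3: "b k + b_lower_upper k = 2 * b_lower k + k" using part3 k3 by simp
  show "b_lower k = b_lower_upper k + 2 + (\<Sum>i=2..k-1. (k choose i) * b_lower i)"
    using s p1 p3 by linarith
qed

end
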